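(* Let $f\colon V_0\to\mathbb{R}$ be continuous such that $\Gamma_f$ is a ruled surface. Let $R_1,R_2$ be distinct rulings of $\Gamma_f$ intersecting at a point $p\in\mathbb{H}$, with $m(R_1)<m(R_2)$. Then for every $m\in[m(R_1),m(R_2)]$, the horizontal line $L_{p,m}$ is a ruling of $\Gamma_f$.
   Context: $\mathbb{H}$ is $\mathbb{R}^3$ with product $(x,y,z)\cdot(x',y',z')=(x+x',y+y',z+z'+\frac{xy'-yx'}{2})$; $X=(1,0,0)$, $Y=(0,1,0)$, $v^t=tv$. A horizontal line is $\{p\cdot tv\}$ with $v=(a,b,0)\ne0$, slope $b/a$; $L_{p,m}=\{p\cdot(X+mY)^t:t\in\mathbb{R}\}$ is the horizontal line of slope $m$ through $p$. A ruled surface is a union of horizontal line segments (rulings) with endpoints in its boundary (for entire $\Gamma_f$ the rulings are horizontal lines). $V_0=\{(x,0,z)\}$, $\Gamma_f=\{u\cdot Y^{f(u)}:u\in V_0\}$. $m(R)$ denotes the slope of a ruling $R$. *)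

theory Defs
  imports "HOL-Analysis.Analysis"
begin

type_synonym heis = "real \<times> real \<times> real"

definition hmult :: "heis \<Rightarrow> heis \<Rightarrow> heis" where
  "hmult p q = (case p of (x,y,z) \<Rightarrow> case q of (x',y',z') \<Rightarrow>
      (x + x', y + y', z + z' + (x * y' - y * x') / 2))"

definition V0 :: "heis set" where
  "V0 = {(x, 0, z) | x z. True}"

definition hline :: "heis \<Rightarrow> real \<Rightarrow> real \<Rightarrow> heis set" where
  "hline p a b = {hmult p (t * a, t * b, 0) | t. True}"

definition horizontal_line :: "heis set \<Rightarrow> bool" where
  "horizontal_line L \<longleftrightarrow> (\<exists>p a b. (a, b) \<noteq> (0, 0) \<and> L = hline p a b)"

definition hslope :: "heis set \<Rightarrow> real" where
  "hslope L = (SOME s. \<exists>p a b. (a, b) \<noteq> (0, 0) \<and> L = hline p a b \<and> s = b / a)"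

definition Lpm :: "heis \<Rightarrow> real \<Rightarrow> heis set" where
  "Lpm p m = {hmult p (t, t * m, 0) | t. True}"

definition graph :: "(heis \<Rightarrow> real) \<Rightarrow> heis set" where
  "graph f = {hmult u (0, f u, 0) | u. u \<in> V0}"

definition ruling :: "(heis \<Rightarrow> real) \<Rightarrow> heis set \<Rightarrow> bool" where
  "ruling f R \<longleftrightarrow> horizontal_line R \<and> R \<subseteq> graph f"

definition ruled_graph :: "(heis \<Rightarrow> real) \<Rightarrow> bool" where
  "ruled_graph f \<longleftrightarrow> (\<forall>q \<in> graph f. \<exists>R. ruling f R \<and> q \<in> R)"

end

theory Submission
  imports Defs
begin

lemma hmult_simp: "hmult (x,y,z) (x',y',z') = (x + x', y + y', z + z' + (x * y' - y * x') / 2)"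
  by (simp add: hmult_def)

lemma graph_iff: "(x,y,z) \<in> graph f \<longleftrightarrow> y = f (x,0,z - x*y/2)"
proof
  assume "(x,y,z) \<in> graph f"
  then obtain x' w where "(x,y,z) = hmult (x',0,w) (0, f (x',0,w), 0)"
    unfolding graph_def V0_def by blast
  then show "y = f (x,0,z - x*y/2)" by (simp add: hmult_simp)
next
  assume h: "y = f (x,0,z - x*y/2)"
  have "(x,y,z) = hmult (x,0,z - x*y/2) (0, f (x,0,z - x*y/2), 0)"
    using h by (simp add: hmult_simp algebra_simps)
  moreover have "(x,0,z - x*y/2) \<in> V0" unfolding V0_def by blast
  ultimately show "(x,y,z) \<in> graph f" unfolding graph_def by blast
qed

lemma vert_not:
  assumes "hline q 0 b \<subseteq> graph f" "b \<noteq> 0"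
  shows False
proof -
  obtain x y z where q: "q = (x,y,z)" by (cases q) auto
  have "hmult q (0*0, 0*b, 0) \<in> hline q 0 b" unfolding hline_def by blast
  hence 1: "y = f (x,0,z - x*y/2)" using assms(1) q by (auto simp: hmult_simp graph_iff)
  have "hmult q (1*0, 1*b, 0) \<in> hline q 0 b" unfolding hline_def by blast
  hence "y + b = f (x,0,z + x*b/2 - x*(y+b)/2)" using assms(1) q by (auto simp: hmult_simp graph_iff)
  moreover have "z + x*b/2 - x*(y+b)/2 = z - x*y/2" by (simp add: algebra_simps)
  ultimately show False using 1 assms(2) by simp
qed

lemma hline_Lpm:
  assumes "a \<noteq> 0"
  shows "hline q a b = Lpm q (b/a)"
proof
  show "hline q a b \<subseteq> Lpm q (b/a)"
  proof
    fix v assume "v \<in> hline q a b"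
    then obtain t where "v = hmult q (t*a, t*b, 0)" unfolding hline_def by blast
    moreover have "(t*a, t*b, 0::real) = (t*a, (t*a)*(b/a), 0)" using assms by simp
    ultimately have "v = hmult q (t*a, (t*a)*(b/a), 0)" by simp
    thus "v \<in> Lpm q (b/a)" unfolding Lpm_def by blast
  qed
next
  show "Lpm q (b/a) \<subseteq> hline q a b"
  proof
    fix v assume "v \<in> Lpm q (b/a)"
    then obtain t where "v = hmult q (t, t*(b/a), 0)" unfolding Lpm_def by blast
    moreover have "(t, t*(b/a), 0::real) = ((t/a)*a, (t/a)*b, 0)" using assms by simp
    ultimately have "v = hmult q ((t/a)*a, (t/a)*b, 0)" by simp
    thus "v \<in> hline q a b" unfolding hline_def by blast
  qed
qed

lemma Lpm_slope_unique:
  assumes "Lpm q \<mu> = Lpm q' \<mu>'"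
  shows "\<mu> = \<mu>'"
proof -
  obtain x y z where q: "q = (x,y,z)" by (cases q) auto
  obtain x' y' z' where q': "q' = (x',y',z')" by (cases q') auto
  have "hmult q (0, 0*\<mu>, 0) \<in> Lpm q \<mu>" unfolding Lpm_def by blast
  then obtain s0 where "hmult q (0, 0*\<mu>, 0) = hmult q' (s0, s0*\<mu>', 0)"
    using assms unfolding Lpm_def by auto
  hence a: "x = x' + s0" "y = y' + s0*\<mu>'" using q q' by (auto simp: hmult_simp)
  have "hmult q (1, 1*\<mu>, 0) \<in> Lpm q \<mu>" unfolding Lpm_def by blast
  then obtain s1 where "hmult q (1, 1*\<mu>, 0) = hmult q' (s1, s1*\<mu>', 0)"
    using assms unfolding Lpm_def by auto
  hence b: "x + 1 = x' + s1" "y + \<mu> = y' + s1*\<mu>'" using q q' by (auto simp: hmult_simp)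
  have "s1 = s0 + 1" using a b by simp
  hence "\<mu> + s0*\<mu>' = (s0+1)*\<mu>'" using b a by simp
  thus ?thesis by (simp add: distrib_right)
qed

lemma ruling_Lpm:
  assumes "ruling f R"
  shows "\<exists>q \<mu>. R = Lpm q \<mu> \<and> hslope R = \<mu>"
proof -
  have sub: "R \<subseteq> graph f" using assms unfolding ruling_def by auto
  obtain q a b where h: "(a,b) \<noteq> (0,0)" "R = hline q a b"
    using assms unfolding ruling_def horizontal_line_def by blast
  have a0: "a \<noteq> 0" using vert_not[of q b f] h sub by auto
  have R: "R = Lpm q (b/a)" using hline_Lpm[OF a0] h by simp
  have "hslope R = b/a"
    unfolding hslope_def
  proof (rule some_equality)
    show "\<exists>p a' b'. (a', b') \<noteq> (0, 0) \<and> R = hline p a' b' \<and> b/a = b'/a'" using h by blast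
  next
    fix s assume "\<exists>p a' b'. (a', b') \<noteq> (0, 0) \<and> R = hline p a' b' \<and> s = b'/a'"
    then obtain p a' b' where h': "(a', b') \<noteq> (0, 0)" "R = hline p a' b'" "s = b'/a'" by blast
    have "a' \<noteq> 0" using vert_not[of p b' f] h' sub by auto
    hence "R = Lpm p (b'/a')" using hline_Lpm h' by simp
    thus "s = b/a" using R Lpm_slope_unique h' by metis
  qed
  thus ?thesis using R by blast
qed

lemma Lpm_recenter:
  assumes "p \<in> Lpm q \<mu>"
  shows "Lpm q \<mu> = Lpm p \<mu>"
proof -
  obtain a b c where q: "q = (a,b,c)" by (cases q) auto
  obtain s where p: "p = hmult q (s, s*\<mu>, 0)" using assms unfolding Lpm_def by auto
  have e: "hmult q (t, t*\<mu>, 0) = hmult p (t - s, (t-s)*\<mu>, 0)" for t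
    using p q by (simp add: hmult_simp field_simps)
  have e2: "hmult p (u, u*\<mu>, 0) = hmult q (u + s, (u+s)*\<mu>, 0)" for u
    using e[of "u+s"] by simp
  show ?thesis unfolding Lpm_def using e e2 by blast
qed

definition par :: "real \<Rightarrow> real \<Rightarrow> real \<Rightarrow> real \<Rightarrow> real \<Rightarrow> real" where
  "par w y \<mu> \<tau>0 \<tau> = w - y*(\<tau>-\<tau>0) - \<mu>*(\<tau>-\<tau>0)^2/2"

definition good :: "(heis \<Rightarrow> real) \<Rightarrow> real \<Rightarrow> real \<Rightarrow> real \<Rightarrow> real \<Rightarrow> real \<Rightarrow> bool" where
  "good f a w y \<mu> \<tau>0 \<longleftrightarrow> (\<forall>\<tau>. f (a+\<tau>, 0, par w y \<mu> \<tau>0 \<tau>) = y + \<mu>*(\<tau>-\<tau>0))"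

lemma Lpm_good:
  assumes "Lpm (qx,qy,qz) \<mu> \<subseteq> graph f"
  shows "good f a (qz - qx*qy/2) qy \<mu> (qx - a)"
  unfolding good_def
proof
  fix \<tau>
  define t where "t = \<tau> - (qx - a)"
  have "hmult (qx,qy,qz) (t, t*\<mu>, 0) \<in> Lpm (qx,qy,qz) \<mu>" unfolding Lpm_def by blast
  hence e1: "qy + t*\<mu> = f (qx + t, 0, qz + (qx*(t*\<mu>) - qy*t)/2 - (qx+t)*(qy+t*\<mu>)/2)"
    using assms by (auto simp: hmult_simp graph_iff)
  have e2: "qx + t = a + \<tau>" unfolding t_def by simp
  have e3: "qz + (qx*(t*\<mu>) - qy*t)/2 - (qx+t)*(qy+t*\<mu>)/2 = par (qz - qx*qy/2) qy \<mu> (qx - a) \<tau>"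
    unfolding par_def t_def by (simp add: field_simps power2_eq_square)
  have "f (a + \<tau>, 0, par (qz - qx*qy/2) qy \<mu> (qx - a) \<tau>) = qy + t*\<mu>"
  proof -
    have "qy + t*\<mu> = f (qx + t, 0, par (qz - qx*qy/2) qy \<mu> (qx - a) \<tau>)" using e1 e3 by metis
    thus ?thesis using e2 by metis
  qed
  thus "f (a + \<tau>, 0, par (qz - qx*qy/2) qy \<mu> (qx - a) \<tau>) = qy + \<mu>*(\<tau> - (qx - a))"
    unfolding t_def by (simp add: mult.commute)
qed

lemma par_ident:
  "par w y \<mu> t0 \<tau> - par w' y' \<mu>' t0' \<tau> =
   (par w y \<mu> t0 r - par w' y' \<mu>' t0' r) + (\<tau>-r)*((y' + \<mu>'*(r-t0')) - (y + \<mu>*(r-t0)))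
   - (\<mu>-\<mu>')*(\<tau>-r)^2/2"
  unfolding par_def by (simp add: field_simps power2_eq_square)

lemma no_cross:
  assumes g1: "good f a w y \<mu> t0" and g2: "good f a w' y' \<mu>' t0'"
    and s1: "par w y \<mu> t0 s1 - par w' y' \<mu>' t0' s1 > 0"
    and s2: "par w y \<mu> t0 s2 - par w' y' \<mu>' t0' s2 < 0"
  shows False
proof -
  define D where "D = (\<lambda>\<tau>. par w y \<mu> t0 \<tau> - par w' y' \<mu>' t0' \<tau>)"
  have cont: "continuous_on S D" for S unfolding D_def par_def by (intro continuous_intros) auto
  obtain r where r: "D r = 0"
  proof (cases "s1 \<le> s2")
    case True
    have "\<exists>x\<ge>s1. x \<le> s2 \<and> D x = 0"
      by (rule IVT2'[of D s2 0 s1]) (use s1 s2 True cont in \<open>auto simp: D_def\<close>)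
    thus ?thesis using that by blast
  next
    case False
    have "\<exists>x\<ge>s2. x \<le> s1 \<and> D x = 0"
      by (rule IVT'[of D s2 0 s1]) (use s1 s2 False cont in \<open>auto simp: D_def\<close>)
    thus ?thesis using that by blast
  qed
  have "par w y \<mu> t0 r = par w' y' \<mu>' t0' r" using r unfolding D_def by simp
  hence m: "y + \<mu>*(r-t0) = y' + \<mu>'*(r-t0')"
    using g1 g2 unfolding good_def by metis
  have k: "D \<tau> = - ((\<mu>-\<mu>') * (\<tau>-r)^2 / 2)" for \<tau>
    using par_ident[of w y \<mu> t0 \<tau> w' y' \<mu>' t0' r] r m unfolding D_def by simp
  have "D s1 * D s2 = ((\<mu>-\<mu>')*(s1-r)*(s2-r)/2)^2" unfolding k by (simp add: power2_eq_square field_simps)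
  hence "D s1 * D s2 \<ge> 0" by simp
  moreover have "D s1 * D s2 < 0" using s1 s2 unfolding D_def by (simp add: mult_pos_neg)
  ultimately show False by simp
qed

theorem lemma4p3:
  fixes f :: "heis \<Rightarrow> real" and R1 R2 :: "heis set" and p :: heis
  assumes "continuous_on V0 f"
    and "ruled_graph f"
    and "ruling f R1" and "ruling f R2" and "R1 \<noteq> R2"
    and "p \<in> R1" and "p \<in> R2"
    and "hslope R1 < hslope R2"
  shows "\<forall>m \<in> {hslope R1 .. hslope R2}. ruling f (Lpm p m)"
proof -
  obtain q1 m1 where h1: "R1 = Lpm q1 m1" "hslope R1 = m1" using ruling_Lpm assms(3) by blast
  obtain q2 m2 where h2: "R2 = Lpm q2 m2" "hslope R2 = m2" using ruling_Lpm assms(4) by blast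
  have L1: "R1 = Lpm p m1" using h1 assms(6) Lpm_recenter by metis
  have L2: "R2 = Lpm p m2" using h2 assms(7) Lpm_recenter by metis
  obtain a b c where p: "p = (a,b,c)" by (cases p) auto
  define w0 where "w0 = c - a*b/2"
  have sub1: "Lpm (a,b,c) m1 \<subseteq> graph f" using L1 p assms(3) unfolding ruling_def by simp
  have sub2: "Lpm (a,b,c) m2 \<subseteq> graph f" using L2 p assms(4) unfolding ruling_def by simp
  have g1: "good f a w0 b m1 0" using Lpm_good[OF sub1, of a] unfolding w0_def by simp
  have g2: "good f a w0 b m2 0" using Lpm_good[OF sub2, of a] unfolding w0_def by simp
  have m12: "m1 < m2" using assms(8) h1 h2 by simp
  have key: "f (a+t, 0, par w0 b m 0 t) = b + m*t" if mm: "m1 \<le> m" "m \<le> m2" for m t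
  proof -
    consider "m = m1" | "m = m2" | "t = 0" | "m1 < m" "m < m2" "t \<noteq> 0" using mm by linarith
    then show ?thesis
    proof cases
      case 1 then show ?thesis using g1 unfolding good_def by simp
    next
      case 2 then show ?thesis using g2 unfolding good_def by simp
    next
      case 3 then show ?thesis using g1[unfolded good_def, rule_format, of 0] unfolding par_def by simp
    next
      case 4
      define w1 where "w1 = par w0 b m 0 t"
      define yQ where "yQ = f (a+t, 0, w1)"
      define Q where "Q = (a+t, yQ, w1 + (a+t)*yQ/2)"
      have "Q \<in> graph f" unfolding Q_def graph_iff yQ_def by simp
      then obtain R where R: "ruling f R" "Q \<in> R" using assms(2) unfolding ruled_graph_def by blast
      obtain q \<mu> where "R = Lpm q \<mu>" using ruling_Lpm[OF R(1)] by blast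
      hence "R = Lpm Q \<mu>" using R(2) Lpm_recenter by metis
      hence "Lpm (a+t, yQ, w1 + (a+t)*yQ/2) \<mu> \<subseteq> graph f" using R(1) unfolding ruling_def Q_def by simp
      from Lpm_good[OF this, of a]
      have gq: "good f a w1 yQ \<mu> t" by simp
      have "\<not> (par w1 yQ \<mu> t 0 - par w0 b m1 0 0 > 0)"
      proof
        assume "par w1 yQ \<mu> t 0 - par w0 b m1 0 0 > 0"
        moreover have "par w1 yQ \<mu> t t - par w0 b m1 0 t < 0"
          using 4 unfolding w1_def par_def by (simp add: algebra_simps)
        ultimately show False using no_cross[OF gq g1] by blast
      qed
      moreover have "\<not> (par w1 yQ \<mu> t 0 - par w0 b m2 0 0 < 0)"
      proof
        assume "par w1 yQ \<mu> t 0 - par w0 b m2 0 0 < 0"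
        moreover have "par w1 yQ \<mu> t t - par w0 b m2 0 t > 0"
          using 4 unfolding w1_def par_def by (simp add: algebra_simps)
        ultimately show False using no_cross[OF gq g2] by blast
      qed
      ultimately have e0: "par w1 yQ \<mu> t 0 = w0" unfolding par_def by simp
      have "f (a+0, 0, par w1 yQ \<mu> t 0) = yQ + \<mu>*(0-t)" using gq unfolding good_def by blast
      moreover have "f (a+0, 0, par w0 b m1 0 0) = b + m1*(0-0)" using g1 unfolding good_def by blast
      ultimately have yq: "yQ = b + \<mu>*t" using e0 unfolding par_def by simp
      have "(\<mu> - m) * t^2 / 2 = 0" using e0 yq unfolding w1_def par_def
        by (simp add: algebra_simps power2_eq_square)
      hence "\<mu> = m" using 4 by simp
      thus ?thesis using yq unfolding yQ_def w1_def by simp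
    qed
  qed
  show ?thesis
  proof
    fix m assume "m \<in> {hslope R1 .. hslope R2}"
    hence mm: "m1 \<le> m" "m \<le> m2" using h1 h2 by auto
    have "horizontal_line (Lpm p m)" unfolding horizontal_line_def
      using hline_Lpm[of 1 p m] by (intro exI[of _ p] exI[of _ 1] exI[of _ m]) simp
    moreover have "Lpm p m \<subseteq> graph f"
    proof
      fix v assume "v \<in> Lpm p m"
      then obtain t where v: "v = hmult p (t, t*m, 0)" unfolding Lpm_def by auto
      have "c + (a*(t*m) - b*t)/2 - (a+t)*(b+t*m)/2 = par w0 b m 0 t"
        unfolding par_def w0_def by (simp add: field_simps power2_eq_square)
      hence e: "b + t*m = f (a+t, 0, c + (a*(t*m) - b*t)/2 - (a+t)*(b+t*m)/2)"
        using key[OF mm, of t] by (simp add: mult.commute)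
      have v': "v = (a+t, b+t*m, c + (a*(t*m) - b*t)/2)" using v p by (simp add: hmult_simp)
      show "v \<in> graph f" unfolding v' graph_iff by (rule e)
    qed
    ultimately show "ruling f (Lpm p m)" unfolding ruling_def by simp
  qed
qed

end
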